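(* For positive integers $n,a,b$ and a nonnegative integer $c$, $M_n(a,b,c)=M_n(b,a,c)$.
   Context: $$M_n(a,b,c):=\operatorname{CT}_x\prod_{i=1}^n(1-x_i)^{-b}x_i^{-a+1}\prod_{1\le i<j\le n}(x_j-x_i)^{-c},$$ where $\operatorname{CT}_x=\operatorname{CT}_{x_n}\cdots\operatorname{CT}_{x_1}$ is iterated constant-term extraction, $(1-x_i)^{-b}$ is expanded as a power series in $x_i$, and for $i<j$, $(x_j-x_i)^{-c}=x_j^{-c}(1-x_i/x_j)^{-c}$ is expanded as a power series in $x_i/x_j$. *)

theory Defs
  imports Complex_Main "HOL-Library.FuncSet"
begin

text \<open>Coefficient of t^k in the power series expansion of (1 - t)^(-r),
  i.e. (-1)^k * binom(-r, k) (= binom(r+k-1,k) for r >= 1, and [k=0] for r = 0).\<close>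
definition negpow_coeff :: "nat \<Rightarrow> nat \<Rightarrow> rat" where
  "negpow_coeff r k = (-1) ^ k * ((- of_nat r) gchoose k)"

text \<open>Variables x_1..x_n are indexed by 0..<n.  A term of the full expansion of
  prod_i (1-x_i)^(-b) x_i^(1-a) prod_{i<j} x_j^(-c) (1 - x_i/x_j)^(-c)
  is indexed by m i (the power taken from (1-x_i)^(-b)) and k (i,j), i<j
  (the power of x_i/x_j taken from (1-x_i/x_j)^(-c)).
  The exponent of x_j in that term:\<close>
definition ct_exponent :: "nat \<Rightarrow> nat \<Rightarrow> nat \<Rightarrow> (nat \<Rightarrow> nat) \<Rightarrow> (nat \<times> nat \<Rightarrow> nat) \<Rightarrow> nat \<Rightarrow> int" where
  "ct_exponent n a c m k j =
     1 - int a + int (m j) + (\<Sum>i\<in>{j<..<n}. int (k (j, i)))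
     - (\<Sum>i\<in>{..<j}. int c + int (k (i, j)))"

definition ct_pairs :: "nat \<Rightarrow> (nat \<times> nat) set" where
  "ct_pairs n = {(i, j). i < j \<and> j < n}"

definition ct_terms :: "nat \<Rightarrow> nat \<Rightarrow> nat \<Rightarrow> ((nat \<Rightarrow> nat) \<times> (nat \<times> nat \<Rightarrow> nat)) set" where
  "ct_terms n a c =
     {(m, k). m \<in> {..<n} \<rightarrow>\<^sub>E UNIV \<and> k \<in> ct_pairs n \<rightarrow>\<^sub>E UNIV
              \<and> (\<forall>j<n. ct_exponent n a c m k j = 0)}"

text \<open>M_n(a,b,c): the iterated constant term CT_{x_n} ... CT_{x_1} of the expansion,
  i.e. the sum of the coefficients of all expansion terms of total monomial 1.\<close>
definition M :: "nat \<Rightarrow> nat \<Rightarrow> nat \<Rightarrow> nat \<Rightarrow> rat" where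
  "M n a b c =
     (\<Sum>(m, k)\<in>ct_terms n a c.
        (\<Prod>i<n. negpow_coeff b (m i)) * (\<Prod>p\<in>ct_pairs n. negpow_coeff c (k p)))"

end

theory Submission
  imports Defs "HOL-Computational_Algebra.Formal_Power_Series"
begin

lemma np_choose: "negpow_coeff r k = of_nat ((r + k - 1) choose k)"
proof (cases "r + k = 0")
  case True then show ?thesis by (simp add: negpow_coeff_def)
next
  case False
  then have h: "1 \<le> r + k" by (simp add: Suc_le_eq)
  have e: "of_nat r + of_nat k - 1 = (of_nat (r + k - 1) :: rat)"
    using of_nat_diff[OF h, where 'a=rat] by simp
  have "negpow_coeff r k = (-1) ^ k * ((-1) ^ k * ((of_nat r + of_nat k - 1) gchoose k))"
    unfolding negpow_coeff_def gbinomial_minus by (rule refl)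
  also have "\<dots> = ((-1) ^ k * (-1) ^ k) * ((of_nat (r + k - 1) :: rat) gchoose k)"
    unfolding e by (simp only: mult.assoc)
  also have "(-1) ^ k * (-1) ^ k = (1::rat)"
    by (simp add: power_add[symmetric])
  finally show ?thesis by (simp only: binomial_gbinomial mult_1)
qed

lemma np_vand: "(\<Sum>t\<in>{0..s}. negpow_coeff y t * negpow_coeff x (s - t)) = negpow_coeff (y + x) s"
proof -
  have "(\<Sum>t\<in>{0..s}. negpow_coeff y t * negpow_coeff x (s - t))
     = (\<Sum>t\<in>{0..s}. (-1)^s * (((- of_nat y) gchoose t) * ((- of_nat x) gchoose (s - t))))"
  proof (rule sum.cong)
    fix t assume "t \<in> {0..s}"
    then have "(-1::rat)^t * (-1)^(s-t) = (-1)^s" by (simp add: power_add[symmetric])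
    then show "negpow_coeff y t * negpow_coeff x (s - t) = (-1)^s * (((- of_nat y) gchoose t) * ((- of_nat x) gchoose (s - t)))"
      unfolding negpow_coeff_def by (metis (no_types, lifting) mult.assoc mult.left_commute)
  qed simp
  also have "\<dots> = (-1)^s * ((- of_nat y + - of_nat x) gchoose s)"
    by (simp add: sum_distrib_left[symmetric] gbinomial_Vandermonde)
  also have "\<dots> = negpow_coeff (y + x) s" by (simp add: negpow_coeff_def add.commute)
  finally show ?thesis .
qed

lemma np_tri: "negpow_coeff c t * negpow_coeff (c + t) m = negpow_coeff c m * negpow_coeff (c + m) t"
proof -
  have "((c + t - 1) choose t) * ((c + t + m - 1) choose m) = ((c + m - 1) choose m) * ((c + m + t - 1) choose t)"
  proof (cases "c = 0")
    case True then show ?thesis by (cases t; cases m) (auto simp: binomial_eq_0)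
  next
    case False
    define N where "N = c + t + m - 1"
    have a: "c + t - 1 = N - m" "c + m - 1 = N - t" "c + m + t - 1 = N" using False by (auto simp: N_def)
    have "(N choose m) * ((N - m) choose t) = (N choose (m + t)) * ((m + t) choose m)"
      using choose_mult[of m "m + t" N] False by (simp add: N_def algebra_simps)
    moreover have "(N choose t) * ((N - t) choose m) = (N choose (m + t)) * ((m + t) choose t)"
      using choose_mult[of t "m + t" N] False by (simp add: N_def algebra_simps)
    moreover have "(m + t) choose m = (m + t) choose t"
      using binomial_symmetric[of m "m+t"] by simp
    ultimately show ?thesis unfolding a by (simp add: N_def mult.commute)
  qed
  then show ?thesis unfolding np_choose by (metis of_nat_mult)
qed

lemma np_sym: "a \<ge> 1 \<Longrightarrow> b \<ge> 1 \<Longrightarrow> negpow_coeff b (a - 1) = negpow_coeff a (b - 1)"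
proof -
  assume "a \<ge> 1" "b \<ge> 1"
  then obtain a' b' where ab: "a = Suc a'" "b = Suc b'" using not0_implies_Suc by (metis not_one_le_zero)
  have "(a' + b') choose a' = (a' + b') choose b'"
    using binomial_symmetric[of a' "a' + b'"] by simp
  then show ?thesis unfolding np_choose ab by (simp add: add.commute)
qed


definition nz :: "nat \<Rightarrow> int \<Rightarrow> rat" where
  "nz b x = (if x < 0 then 0 else negpow_coeff b (nat x))"

lemma G_id:
  "(\<Sum>t\<le>p. negpow_coeff b (p - t) * negpow_coeff c t * negpow_coeff (a + c + t) q)
   = (\<Sum>t\<le>q. negpow_coeff a (q - t) * negpow_coeff c t * negpow_coeff (b + c + t) p)"
proof -
  have "(\<Sum>t\<le>p. negpow_coeff b (p - t) * negpow_coeff c t * negpow_coeff (a + c + t) q)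
     = (\<Sum>t\<le>p. \<Sum>m\<le>q. negpow_coeff b (p - t) * negpow_coeff c t * (negpow_coeff (c + t) m * negpow_coeff a (q - m)))"
  proof (rule sum.cong)
    fix t
    have "negpow_coeff (a + c + t) q = (\<Sum>m\<le>q. negpow_coeff (c + t) m * negpow_coeff a (q - m))"
      using np_vand[of "c + t" a q] by (simp add: atLeast0AtMost add.commute add.left_commute)
    then show "negpow_coeff b (p - t) * negpow_coeff c t * negpow_coeff (a + c + t) q
      = (\<Sum>m\<le>q. negpow_coeff b (p - t) * negpow_coeff c t * (negpow_coeff (c + t) m * negpow_coeff a (q - m)))"
      by (simp add: sum_distrib_left)
  qed simp
  also have "\<dots> = (\<Sum>t\<le>p. \<Sum>m\<le>q. negpow_coeff a (q - m) * negpow_coeff c m * (negpow_coeff (c + m) t * negpow_coeff b (p - t)))"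
  proof (intro sum.cong refl)
    fix t m
    show "negpow_coeff b (p - t) * negpow_coeff c t * (negpow_coeff (c + t) m * negpow_coeff a (q - m))
      = negpow_coeff a (q - m) * negpow_coeff c m * (negpow_coeff (c + m) t * negpow_coeff b (p - t))"
      using np_tri[of c t m] by (simp add: algebra_simps)
  qed
  also have "\<dots> = (\<Sum>m\<le>q. \<Sum>t\<le>p. negpow_coeff a (q - m) * negpow_coeff c m * (negpow_coeff (c + m) t * negpow_coeff b (p - t)))"
    by (rule sum.swap)
  also have "\<dots> = (\<Sum>m\<le>q. negpow_coeff a (q - m) * negpow_coeff c m * negpow_coeff (b + c + m) p)"
  proof (rule sum.cong)
    fix m
    have "(\<Sum>t\<le>p. negpow_coeff (c + m) t * negpow_coeff b (p - t)) = negpow_coeff (b + c + m) p"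
      using np_vand[of "c + m" b p] by (simp add: atLeast0AtMost add.commute add.left_commute)
    then show "(\<Sum>t\<le>p. negpow_coeff a (q - m) * negpow_coeff c m * (negpow_coeff (c + m) t * negpow_coeff b (p - t)))
       = negpow_coeff a (q - m) * negpow_coeff c m * negpow_coeff (b + c + m) p"
      by (simp add: sum_distrib_left[symmetric])
  qed simp
  finally show ?thesis .
qed

lemma nz_sum_restrict:
  assumes "p \<le> N"
  shows "(\<Sum>t\<le>N. nz b (int p - int t) * f t) = (\<Sum>t\<le>p. negpow_coeff b (p - t) * f t)"
proof -
  have "(\<Sum>t\<le>N. nz b (int p - int t) * f t) = (\<Sum>t\<le>p. nz b (int p - int t) * f t)"
    by (rule sum.mono_neutral_right) (use assms in \<open>auto simp: nz_def\<close>)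
  also have "\<dots> = (\<Sum>t\<le>p. negpow_coeff b (p - t) * f t)"
    by (rule sum.cong) (auto simp: nz_def nat_diff_distrib)
  finally show ?thesis .
qed

lemma base_id:
  assumes "\<alpha> \<le> int N" "\<beta> \<le> int N"
  shows "(\<Sum>t\<le>N. nz b (\<alpha> - int t) * negpow_coeff c t * nz (a + c + t) \<beta>)
       = (\<Sum>t\<le>N. nz a (\<beta> - int t) * negpow_coeff c t * nz (b + c + t) \<alpha>)"
proof (cases "\<alpha> < 0 \<or> \<beta> < 0")
  case True then show ?thesis by (auto simp: nz_def intro!: sum.neutral)
next
  case False
  then obtain p q where pq: "\<alpha> = int p" "\<beta> = int q" by (metis nonneg_int_cases not_less)
  have "p \<le> N" "q \<le> N" using assms pq by auto
  have L: "(\<Sum>t\<le>N. nz b (\<alpha> - int t) * negpow_coeff c t * nz (a + c + t) \<beta>)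
     = (\<Sum>t\<le>p. negpow_coeff b (p - t) * negpow_coeff c t * negpow_coeff (a + c + t) q)"
    using nz_sum_restrict[OF \<open>p \<le> N\<close>, of b "\<lambda>t. negpow_coeff c t * nz (a + c + t) \<beta>"]
    by (simp add: pq nz_def mult.assoc)
  have R: "(\<Sum>t\<le>N. nz a (\<beta> - int t) * negpow_coeff c t * nz (b + c + t) \<alpha>)
     = (\<Sum>t\<le>q. negpow_coeff a (q - t) * negpow_coeff c t * negpow_coeff (b + c + t) p)"
    using nz_sum_restrict[OF \<open>q \<le> N\<close>, of a "\<lambda>t. negpow_coeff c t * nz (b + c + t) \<alpha>"]
    by (simp add: pq nz_def mult.assoc)
  show ?thesis unfolding L R by (rule G_id)
qed


definition gexp :: "nat list \<Rightarrow> nat \<Rightarrow> (nat \<Rightarrow> nat) \<Rightarrow> (nat \<times> nat \<Rightarrow> nat) \<Rightarrow> nat \<Rightarrow> int" where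
  "gexp A c m k j =
     1 - int (A ! j) + int (m j) + (\<Sum>i\<in>{j<..<length A}. int (k (j, i)))
     - (\<Sum>i\<in>{..<j}. int c + int (k (i, j)))"

definition gterms :: "nat list \<Rightarrow> nat \<Rightarrow> ((nat \<Rightarrow> nat) \<times> (nat \<times> nat \<Rightarrow> nat)) set" where
  "gterms A c =
     {(m, k). m \<in> {..<length A} \<rightarrow>\<^sub>E UNIV \<and> k \<in> ct_pairs (length A) \<rightarrow>\<^sub>E UNIV
              \<and> (\<forall>j<length A. gexp A c m k j = 0)}"

definition gw :: "nat list \<Rightarrow> nat \<Rightarrow> nat \<Rightarrow> (nat \<Rightarrow> nat) \<times> (nat \<times> nat \<Rightarrow> nat) \<Rightarrow> rat" where
  "gw B n c x = (\<Prod>i<n. negpow_coeff (B ! i) (fst x i)) * (\<Prod>p\<in>ct_pairs n. negpow_coeff c (snd x p))"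

definition Mg :: "nat list \<Rightarrow> nat list \<Rightarrow> nat \<Rightarrow> rat" where
  "Mg A B c = (\<Sum>x\<in>gterms A c. gw B (length A) c x)"

lemma M_Mg: "M n a b c = Mg (replicate n a) (replicate n b) c"
proof -
  have "ct_terms n a c = gterms (replicate n a) c"
    unfolding ct_terms_def gterms_def
  proof (intro Collect_cong ext, clarsimp)
    fix m k
    have "\<And>j. j < n \<Longrightarrow> ct_exponent n a c m k j = gexp (replicate n a) c m k j"
      unfolding ct_exponent_def gexp_def by simp
    then show "(m \<in> {..<n} \<rightarrow>\<^sub>E UNIV \<and> k \<in> ct_pairs n \<rightarrow>\<^sub>E UNIV \<and> (\<forall>j<n. ct_exponent n a c m k j = 0)) =
         (m \<in> {..<n} \<rightarrow>\<^sub>E UNIV \<and> k \<in> ct_pairs n \<rightarrow>\<^sub>E UNIV \<and> (\<forall>j<n. gexp (replicate n a) c m k j = 0))"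
      by auto
  qed
  then show ?thesis
    unfolding M_def Mg_def gw_def
    by (auto intro!: sum.cong prod.cong simp: case_prod_beta)
qed


definition shiftA :: "nat list \<Rightarrow> nat \<Rightarrow> nat list \<Rightarrow> nat list" where
  "shiftA A c \<kappa> = map2 (\<lambda>a k. a + c + k) A \<kappa>"

lemma length_shiftA[simp]: "length \<kappa> = length A \<Longrightarrow> length (shiftA A c \<kappa>) = length A"
  by (simp add: shiftA_def)

lemma shiftA_nth: "length \<kappa> = length A \<Longrightarrow> j < length A \<Longrightarrow> shiftA A c \<kappa> ! j = A ! j + c + \<kappa> ! j"
  by (simp add: shiftA_def)

definition Ls :: "nat \<Rightarrow> nat \<Rightarrow> nat list set" where
  "Ls r N = {xs. length xs = r \<and> set xs \<subseteq> {..N}}"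

lemma finite_Ls: "finite (Ls r N)"
  unfolding Ls_def using finite_lists_length_eq[of "{..N}" r] by (simp add: conj_commute)

definition glue :: "nat \<Rightarrow> nat \<Rightarrow> nat list \<times> ((nat \<Rightarrow> nat) \<times> (nat \<times> nat \<Rightarrow> nat)) \<Rightarrow> (nat \<Rightarrow> nat) \<times> (nat \<times> nat \<Rightarrow> nat)" where
  "glue n a0 z =
    ((\<lambda>j. if j = 0 then a0 - 1 - sum_list (fst z) else if j \<le> n then fst (snd z) (j - 1) else undefined),
     (\<lambda>p. if fst p < snd p \<and> snd p \<le> n then
             (if fst p = 0 then fst z ! (snd p - 1) else snd (snd z) (fst p - 1, snd p - 1))
          else undefined))"

definition splt :: "nat \<Rightarrow> (nat \<Rightarrow> nat) \<times> (nat \<times> nat \<Rightarrow> nat) \<Rightarrow> nat list \<times> ((nat \<Rightarrow> nat) \<times> (nat \<times> nat \<Rightarrow> nat))" where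
  "splt n x = (map (\<lambda>j. snd x (0, Suc j)) [0..<n],
               restrict (\<lambda>j. fst x (Suc j)) {..<n},
               restrict (\<lambda>p. snd x (Suc (fst p), Suc (snd p))) (ct_pairs n))"

lemma Suc_image_gl: "{Suc j<..<Suc n} = Suc ` {j<..<n}"
  by (rule set_eqI, case_tac x) auto

lemma Suc_image_0: "{0<..<Suc n} = Suc ` {..<n}"
  by (rule set_eqI, case_tac x) auto

lemma exp0:
  assumes "length \<kappa> = length A" "\<forall>j<length A. k (0, Suc j) = \<kappa> ! j"
  shows "gexp (a0 # A) c m k 0 = 1 - int a0 + int (m 0) + int (sum_list \<kappa>)"
proof -
  have "(\<Sum>i\<in>{0<..<Suc (length A)}. int (k (0, i))) = (\<Sum>j<length A. int (k (0, Suc j)))"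
    unfolding Suc_image_0 by (subst sum.reindex) auto
  also have "\<dots> = (\<Sum>j<length A. int (\<kappa> ! j))" using assms(2) by simp
  also have "\<dots> = int (sum_list \<kappa>)"
    using assms(1) by (simp add: sum_list_sum_nth atLeast0LessThan)
  finally show ?thesis unfolding gexp_def by simp
qed

lemma expS:
  assumes len: "length \<kappa> = length A" and j: "j < length A"
    and hm: "\<forall>j<length A. m (Suc j) = m' j"
    and h0: "\<forall>j<length A. k (0, Suc j) = \<kappa> ! j"
    and hk: "\<forall>i j. i < j \<longrightarrow> j < length A \<longrightarrow> k (Suc i, Suc j) = k' (i, j)"
  shows "gexp (a0 # A) c m k (Suc j) = gexp (shiftA A c \<kappa>) c m' k' j"
proof -
  have s1: "(\<Sum>i\<in>{Suc j<..<Suc (length A)}. int (k (Suc j, i))) = (\<Sum>i\<in>{j<..<length A}. int (k' (j, i)))"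
  proof -
    have "(\<Sum>i\<in>{Suc j<..<Suc (length A)}. int (k (Suc j, i))) = (\<Sum>i\<in>{j<..<length A}. int (k (Suc j, Suc i)))"
      unfolding Suc_image_gl by (subst sum.reindex) auto
    also have "\<dots> = (\<Sum>i\<in>{j<..<length A}. int (k' (j, i)))"
      using hk by (intro sum.cong) auto
    finally show ?thesis .
  qed
  have s2: "(\<Sum>i<Suc j. int c + int (k (i, Suc j))) = int c + int (\<kappa> ! j) + (\<Sum>i<j. int c + int (k' (i, j)))"
  proof -
    have "(\<Sum>i<Suc j. int c + int (k (i, Suc j))) = (int c + int (k (0, Suc j))) + (\<Sum>i<j. int c + int (k (Suc i, Suc j)))"
      by (rule sum.lessThan_Suc_shift)
    also have "\<dots> = int c + int (\<kappa> ! j) + (\<Sum>i<j. int c + int (k' (i, j)))"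
      using hk h0 j by (auto intro!: sum.cong)
    finally show ?thesis .
  qed
  show ?thesis
    unfolding gexp_def using s1 s2 len j hm by (simp add: shiftA_nth)
qed

definition Kset :: "nat \<Rightarrow> nat \<Rightarrow> nat list set" where
  "Kset n a0 = {\<kappa>. length \<kappa> = n \<and> sum_list \<kappa> < a0}"

lemma Kset_sub: "a0 \<le> N \<Longrightarrow> Kset n a0 \<subseteq> Ls n N"
  unfolding Kset_def Ls_def
  by (auto dest!: member_le_sum_list)

lemma finite_Kset: "finite (Kset n a0)"
  using Kset_sub[of a0 a0 n] finite_Ls by (meson finite_subset order_refl)

lemma ct_pairs_Suc_iff: "p \<in> ct_pairs (Suc n) \<longleftrightarrow> fst p < snd p \<and> snd p \<le> n"
  by (cases p) (auto simp: ct_pairs_def)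

lemma glue_in:
  assumes "\<kappa> \<in> Kset (length A) a0" "x \<in> gterms (shiftA A c \<kappa>) c"
  shows "glue (length A) a0 (\<kappa>, x) \<in> gterms (a0 # A) c"
proof -
  let ?n = "length A"
  obtain m' k' where x: "x = (m', k')" by (cases x)
  have len: "length \<kappa> = ?n" and lt: "sum_list \<kappa> < a0" using assms(1) by (auto simp: Kset_def)
  have xm: "m' \<in> {..<?n} \<rightarrow>\<^sub>E UNIV" and xk: "k' \<in> ct_pairs ?n \<rightarrow>\<^sub>E UNIV"
    and xe: "\<forall>j<?n. gexp (shiftA A c \<kappa>) c m' k' j = 0"
    using assms(2) len by (auto simp: gterms_def x)
  define m where "m = fst (glue ?n a0 (\<kappa>, x))"
  define k where "k = snd (glue ?n a0 (\<kappa>, x))"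
  have g: "glue ?n a0 (\<kappa>, x) = (m, k)" by (simp add: m_def k_def)
  have mS: "\<forall>j<?n. m (Suc j) = m' j" by (auto simp: m_def glue_def x)
  have k0: "\<forall>j<?n. k (0, Suc j) = \<kappa> ! j" by (auto simp: k_def glue_def)
  have kS: "\<forall>i j. i < j \<longrightarrow> j < ?n \<longrightarrow> k (Suc i, Suc j) = k' (i, j)" by (auto simp: k_def glue_def x)
  have m0: "m 0 = a0 - 1 - sum_list \<kappa>" by (simp add: m_def glue_def)
  have "m \<in> {..<length (a0 # A)} \<rightarrow>\<^sub>E UNIV" by (auto simp: m_def glue_def PiE_def extensional_def)
  moreover have "k \<in> ct_pairs (length (a0 # A)) \<rightarrow>\<^sub>E UNIV"
    by (auto simp: k_def glue_def PiE_def extensional_def ct_pairs_Suc_iff)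
  moreover have "\<forall>j<length (a0 # A). gexp (a0 # A) c m k j = 0"
  proof (intro allI impI)
    fix j assume "j < length (a0 # A)"
    show "gexp (a0 # A) c m k j = 0"
    proof (cases j)
      case 0
      then show ?thesis using exp0[OF len k0, of a0 c m] m0 lt by simp
    next
      case (Suc j')
      then have "j' < ?n" using \<open>j < length (a0 # A)\<close> by simp
      then show ?thesis using expS[OF len \<open>j' < ?n\<close> mS k0 kS, of a0 c] xe Suc by simp
    qed
  qed
  ultimately show ?thesis unfolding g gterms_def by simp
qed

lemma splt_in:
  assumes "y \<in> gterms (a0 # A) c"
  shows "splt (length A) y \<in> Sigma (Kset (length A) a0) (\<lambda>\<kappa>. gterms (shiftA A c \<kappa>) c)"
proof -
  let ?n = "length A"
  obtain m k where y: "y = (m, k)" by (cases y)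
  have ym: "m \<in> {..<Suc ?n} \<rightarrow>\<^sub>E UNIV" and yk: "k \<in> ct_pairs (Suc ?n) \<rightarrow>\<^sub>E UNIV"
    and ye: "\<forall>j<Suc ?n. gexp (a0 # A) c m k j = 0"
    using assms by (auto simp: gterms_def y)
  define \<kappa> where "\<kappa> = map (\<lambda>j. k (0, Suc j)) [0..<?n]"
  define m' where "m' = restrict (\<lambda>j. m (Suc j)) {..<?n}"
  define k' where "k' = restrict (\<lambda>p. k (Suc (fst p), Suc (snd p))) (ct_pairs ?n)"
  have sp: "splt ?n y = (\<kappa>, m', k')" by (simp add: splt_def y \<kappa>_def m'_def k'_def)
  have len: "length \<kappa> = ?n" by (simp add: \<kappa>_def)
  have k0: "\<forall>j<?n. k (0, Suc j) = \<kappa> ! j" by (simp add: \<kappa>_def)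
  have mS: "\<forall>j<?n. m (Suc j) = m' j" by (simp add: m'_def)
  have kS: "\<forall>i j. i < j \<longrightarrow> j < ?n \<longrightarrow> k (Suc i, Suc j) = k' (i, j)" by (simp add: k'_def ct_pairs_def)
  have "gexp (a0 # A) c m k 0 = 0" using ye by simp
  then have "1 - int a0 + int (m 0) + int (sum_list \<kappa>) = 0" using exp0[OF len k0] by simp
  then have "sum_list \<kappa> < a0" by linarith
  then have "\<kappa> \<in> Kset ?n a0" using len by (simp add: Kset_def)
  moreover have "(m', k') \<in> gterms (shiftA A c \<kappa>) c"
  proof -
    have "m' \<in> {..<?n} \<rightarrow>\<^sub>E UNIV" by (simp add: m'_def)
    moreover have "k' \<in> ct_pairs ?n \<rightarrow>\<^sub>E UNIV" by (simp add: k'_def)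
    moreover have "\<forall>j<?n. gexp (shiftA A c \<kappa>) c m' k' j = 0"
    proof (intro allI impI)
      fix j assume "j < ?n"
      then show "gexp (shiftA A c \<kappa>) c m' k' j = 0"
        using expS[OF len \<open>j < ?n\<close> mS k0 kS, of a0 c] ye by simp
    qed
    ultimately show ?thesis using len by (simp add: gterms_def)
  qed
  ultimately show ?thesis unfolding sp by simp
qed

lemma glue_splt:
  assumes "y \<in> gterms (a0 # A) c"
  shows "glue (length A) a0 (splt (length A) y) = y"
proof -
  let ?n = "length A"
  obtain m k where y: "y = (m, k)" by (cases y)
  have ym: "m \<in> {..<Suc ?n} \<rightarrow>\<^sub>E UNIV" and yk: "k \<in> ct_pairs (Suc ?n) \<rightarrow>\<^sub>E UNIV"
    and ye: "\<forall>j<Suc ?n. gexp (a0 # A) c m k j = 0"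
    using assms by (auto simp: gterms_def y)
  define \<kappa> where "\<kappa> = map (\<lambda>j. k (0, Suc j)) [0..<?n]"
  have len: "length \<kappa> = ?n" by (simp add: \<kappa>_def)
  have k0: "\<forall>j<?n. k (0, Suc j) = \<kappa> ! j" by (simp add: \<kappa>_def)
  have "gexp (a0 # A) c m k 0 = 0" using ye by simp
  then have "1 - int a0 + int (m 0) + int (sum_list \<kappa>) = 0" using exp0[OF len k0] by simp
  then have m0: "m 0 = a0 - 1 - sum_list \<kappa>" by linarith
  have "fst (glue ?n a0 (splt ?n y)) = m"
  proof
    fix j
    show "fst (glue ?n a0 (splt ?n y)) j = m j"
    proof (cases "j = 0")
      case True then show ?thesis using m0 by (simp add: glue_def splt_def y \<kappa>_def)
    next
      case False
      show ?thesis
      proof (cases "j \<le> ?n")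
        case True
        obtain j' where j': "j = Suc j'" using False by (cases j) auto
        have "j' < ?n" using True j' by simp
        then show ?thesis unfolding j' by (simp add: glue_def splt_def y)
      next
        case False2: False
        then have "j \<notin> {..<Suc ?n}" by simp
        then have "m j = undefined" by (rule PiE_arb[OF ym])
        then show ?thesis using False False2 by (simp add: glue_def splt_def y)
      qed
    qed
  qed
  moreover have "snd (glue ?n a0 (splt ?n y)) = k"
  proof
    fix p :: "nat \<times> nat"
    obtain i j where p: "p = (i, j)" by (cases p)
    show "snd (glue ?n a0 (splt ?n y)) p = k p"
    proof (cases "i < j \<and> j \<le> ?n")
      case True
      then obtain j' where j': "j = Suc j'" by (cases j) auto
      show ?thesis
      proof (cases "i = 0")
        case True then show ?thesis using \<open>i < j \<and> j \<le> ?n\<close> j' by (simp add: glue_def splt_def y p)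
      next
        case False
        then obtain i' where i': "i = Suc i'" by (cases i) auto
        have "(i', j') \<in> ct_pairs ?n" using \<open>i < j \<and> j \<le> ?n\<close> i' j' by (simp add: ct_pairs_def)
        then show ?thesis using \<open>i < j \<and> j \<le> ?n\<close> i' j' by (simp add: glue_def splt_def y p)
      qed
    next
      case False
      then have "p \<notin> ct_pairs (Suc ?n)" by (simp add: ct_pairs_Suc_iff p)
      then have "k p = undefined" by (rule PiE_arb[OF yk])
      then show ?thesis using False by (auto simp: glue_def p)
    qed
  qed
  ultimately show ?thesis by (simp add: y prod_eq_iff)
qed

lemma splt_glue:
  assumes "\<kappa> \<in> Kset (length A) a0" "x \<in> gterms (shiftA A c \<kappa>) c"
  shows "splt (length A) (glue (length A) a0 (\<kappa>, x)) = (\<kappa>, x)"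
proof -
  let ?n = "length A"
  obtain m' k' where x: "x = (m', k')" by (cases x)
  have len: "length \<kappa> = ?n" using assms(1) by (auto simp: Kset_def)
  have xm: "m' \<in> {..<?n} \<rightarrow>\<^sub>E UNIV" and xk: "k' \<in> ct_pairs ?n \<rightarrow>\<^sub>E UNIV"
    using assms(2) len by (auto simp: gterms_def x)
  have 1: "map (\<lambda>j. snd (glue ?n a0 (\<kappa>, x)) (0, Suc j)) [0..<?n] = \<kappa>"
    using len by (auto simp: glue_def intro!: nth_equalityI)
  have 2: "restrict (\<lambda>j. fst (glue ?n a0 (\<kappa>, x)) (Suc j)) {..<?n} = m'"
  proof -
    have "restrict (\<lambda>j. fst (glue ?n a0 (\<kappa>, x)) (Suc j)) {..<?n} = restrict m' {..<?n}"
      by (auto simp: glue_def x intro!: restrict_ext)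
    also have "\<dots> = m'" using xm by (simp add: PiE_restrict)
    finally show ?thesis .
  qed
  have 3: "restrict (\<lambda>p. snd (glue ?n a0 (\<kappa>, x)) (Suc (fst p), Suc (snd p))) (ct_pairs ?n) = k'"
  proof -
    have "restrict (\<lambda>p. snd (glue ?n a0 (\<kappa>, x)) (Suc (fst p), Suc (snd p))) (ct_pairs ?n) = restrict k' (ct_pairs ?n)"
      by (auto simp: glue_def x ct_pairs_def intro!: restrict_ext)
    also have "\<dots> = k'" using xk by (simp add: PiE_restrict)
    finally show ?thesis .
  qed
  show ?thesis using 1 2 3 by (simp add: splt_def x)
qed


lemma prod_list_map_nth: "prod_list (map f xs) = (\<Prod>j<length xs. f (xs ! j))"
proof (induction xs)
  case Nil then show ?case by simp
next
  case (Cons x xs)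
  show ?case using Cons by (simp add: prod.lessThan_Suc_shift del: prod.lessThan_Suc)
qed

lemma finite_ct_pairs: "finite (ct_pairs n)"
  by (rule finite_subset[of _ "{..<n} \<times> {..<n}"]) (auto simp: ct_pairs_def)

lemma ct_pairs_Suc: "ct_pairs (Suc n) = (\<lambda>j. (0, Suc j)) ` {..<n} \<union> (\<lambda>p. (Suc (fst p), Suc (snd p))) ` ct_pairs n"
proof (rule set_eqI)
  fix p :: "nat \<times> nat"
  obtain i j where p: "p = (i, j)" by (cases p)
  show "p \<in> ct_pairs (Suc n) \<longleftrightarrow> p \<in> (\<lambda>j. (0, Suc j)) ` {..<n} \<union> (\<lambda>p. (Suc (fst p), Suc (snd p))) ` ct_pairs n"
  proof
    assume "p \<in> ct_pairs (Suc n)"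
    then have ij: "i < j" "j < Suc n" by (auto simp: ct_pairs_def p)
    then obtain j' where j': "j = Suc j'" by (cases j) auto
    show "p \<in> (\<lambda>j. (0, Suc j)) ` {..<n} \<union> (\<lambda>p. (Suc (fst p), Suc (snd p))) ` ct_pairs n"
    proof (cases i)
      case 0 then show ?thesis using ij j' p by auto
    next
      case (Suc i')
      then have "(i', j') \<in> ct_pairs n" using ij j' by (simp add: ct_pairs_def)
      then show ?thesis using Suc j' p by (auto simp: image_iff intro!: bexI[of _ "(i', j')"])
    qed
  next
    assume "p \<in> (\<lambda>j. (0, Suc j)) ` {..<n} \<union> (\<lambda>p. (Suc (fst p), Suc (snd p))) ` ct_pairs n"
    then show "p \<in> ct_pairs (Suc n)" by (auto simp: ct_pairs_def)
  qed
qed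

lemma gw_glue:
  assumes "length \<kappa> = n"
  shows "gw (b0 # B) (Suc n) c (glue n a0 (\<kappa>, x))
       = negpow_coeff b0 (a0 - 1 - sum_list \<kappa>) * prod_list (map (negpow_coeff c) \<kappa>) * gw B n c x"
proof -
  let ?g = "glue n a0 (\<kappa>, x)"
  have P1: "(\<Prod>i<Suc n. negpow_coeff ((b0 # B) ! i) (fst ?g i))
      = negpow_coeff b0 (a0 - 1 - sum_list \<kappa>) * (\<Prod>i<n. negpow_coeff (B ! i) (fst x i))"
  proof -
    have "(\<Prod>i<Suc n. negpow_coeff ((b0 # B) ! i) (fst ?g i))
        = negpow_coeff b0 (fst ?g 0) * (\<Prod>i<n. negpow_coeff (B ! i) (fst ?g (Suc i)))"
      by (subst prod.lessThan_Suc_shift) simp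
    also have "(\<Prod>i<n. negpow_coeff (B ! i) (fst ?g (Suc i))) = (\<Prod>i<n. negpow_coeff (B ! i) (fst x i))"
      by (rule prod.cong) (auto simp: glue_def)
    finally show ?thesis by (simp add: glue_def)
  qed
  have disj: "(\<lambda>j. (0::nat, Suc j)) ` {..<n} \<inter> (\<lambda>p. (Suc (fst p), Suc (snd p))) ` ct_pairs n = {}"
    by auto
  have P2: "(\<Prod>p\<in>ct_pairs (Suc n). negpow_coeff c (snd ?g p))
      = prod_list (map (negpow_coeff c) \<kappa>) * (\<Prod>p\<in>ct_pairs n. negpow_coeff c (snd x p))"
  proof -
    have "(\<Prod>p\<in>ct_pairs (Suc n). negpow_coeff c (snd ?g p))
        = (\<Prod>p\<in>(\<lambda>j. (0, Suc j)) ` {..<n}. negpow_coeff c (snd ?g p))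
          * (\<Prod>p\<in>(\<lambda>p. (Suc (fst p), Suc (snd p))) ` ct_pairs n. negpow_coeff c (snd ?g p))"
      unfolding ct_pairs_Suc by (rule prod.union_disjoint) (auto simp: finite_ct_pairs)
    also have "(\<Prod>p\<in>(\<lambda>j. (0, Suc j)) ` {..<n}. negpow_coeff c (snd ?g p)) = (\<Prod>j<n. negpow_coeff c (\<kappa> ! j))"
      by (subst prod.reindex) (auto simp: inj_on_def glue_def intro!: prod.cong)
    also have "\<dots> = prod_list (map (negpow_coeff c) \<kappa>)"
      using assms by (simp add: prod_list_map_nth)
    also have "(\<Prod>p\<in>(\<lambda>p. (Suc (fst p), Suc (snd p))) ` ct_pairs n. negpow_coeff c (snd ?g p))
        = (\<Prod>p\<in>ct_pairs n. negpow_coeff c (snd x p))"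
      by (subst prod.reindex) (auto simp: inj_on_def glue_def ct_pairs_def prod_eq_iff intro!: prod.cong)
    finally show ?thesis .
  qed
  show ?thesis unfolding gw_def using P1 P2 by (simp add: mult_ac)
qed

lemma gterms_sub:
  "gterms (a0 # A) c \<subseteq> glue (length A) a0 ` Sigma (Kset (length A) a0) (\<lambda>\<kappa>. gterms (shiftA A c \<kappa>) c)"
proof
  fix y assume y: "y \<in> gterms (a0 # A) c"
  show "y \<in> glue (length A) a0 ` Sigma (Kset (length A) a0) (\<lambda>\<kappa>. gterms (shiftA A c \<kappa>) c)"
    using splt_in[OF y] glue_splt[OF y] by (metis image_eqI)
qed

lemma finite_gterms: "finite (gterms A c)"
proof -
  have "\<forall>A. length A = n \<longrightarrow> finite (gterms A c)" for n
  proof (induction n)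
    case 0
    have "gterms [] c \<subseteq> {(\<lambda>_. undefined, \<lambda>_. undefined)}"
      by (auto simp: gterms_def ct_pairs_def)
    then show ?case by (auto intro: finite_subset)
  next
    case (Suc n)
    show ?case
    proof (intro allI impI)
      fix A :: "nat list" assume "length A = Suc n"
      then obtain a0 A' where A: "A = a0 # A'" "length A' = n" by (cases A) auto
      have "finite (Sigma (Kset (length A') a0) (\<lambda>\<kappa>. gterms (shiftA A' c \<kappa>) c))"
        using Suc.IH A(2) by (intro finite_SigmaI finite_Kset) (auto simp: Kset_def)
      then show "finite (gterms A c)"
        unfolding A(1) using gterms_sub by (metis finite_imageI finite_subset)
    qed
  qed
  then show ?thesis by simp
qed

lemma peel:
  assumes "a0 \<le> N"
  shows "Mg (a0 # A) (b0 # B) c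
    = (\<Sum>\<kappa>\<in>Ls (length A) N. nz b0 (int a0 - 1 - int (sum_list \<kappa>)) * prod_list (map (negpow_coeff c) \<kappa>)
         * Mg (shiftA A c \<kappa>) B c)"
proof -
  let ?n = "length A"
  let ?K = "Kset ?n a0"
  let ?G = "\<lambda>\<kappa>. gterms (shiftA A c \<kappa>) c"
  have "Mg (a0 # A) (b0 # B) c = (\<Sum>y\<in>gterms (a0 # A) c. gw (b0 # B) (Suc ?n) c y)"
    by (simp add: Mg_def)
  also have "\<dots> = (\<Sum>z\<in>Sigma ?K ?G. gw (b0 # B) (Suc ?n) c (glue ?n a0 z))"
  proof (rule sum.reindex_bij_witness[where i = "glue ?n a0" and j = "splt ?n"])
    fix y assume "y \<in> gterms (a0 # A) c"
    then show "glue ?n a0 (splt ?n y) = y" "splt ?n y \<in> Sigma ?K ?G"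
      "gw (b0 # B) (Suc ?n) c (glue ?n a0 (splt ?n y)) = gw (b0 # B) (Suc ?n) c y"
      using glue_splt splt_in by auto
  next
    fix z assume "z \<in> Sigma ?K ?G"
    then obtain \<kappa> x where z: "z = (\<kappa>, x)" "\<kappa> \<in> ?K" "x \<in> ?G \<kappa>" by auto
    then show "splt ?n (glue ?n a0 z) = z" "glue ?n a0 z \<in> gterms (a0 # A) c"
      using splt_glue glue_in by auto
  qed
  also have "\<dots> = (\<Sum>\<kappa>\<in>?K. \<Sum>x\<in>?G \<kappa>. gw (b0 # B) (Suc ?n) c (glue ?n a0 (\<kappa>, x)))"
    using sum.Sigma[of ?K ?G "\<lambda>\<kappa> x. gw (b0 # B) (Suc ?n) c (glue ?n a0 (\<kappa>, x))", symmetric]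
    by (simp add: finite_Kset finite_gterms split_def)
  also have "\<dots> = (\<Sum>\<kappa>\<in>?K. negpow_coeff b0 (a0 - 1 - sum_list \<kappa>) * prod_list (map (negpow_coeff c) \<kappa>)
         * Mg (shiftA A c \<kappa>) B c)"
  proof (rule sum.cong)
    fix \<kappa> assume "\<kappa> \<in> ?K"
    then have len: "length \<kappa> = ?n" by (simp add: Kset_def)
    show "(\<Sum>x\<in>?G \<kappa>. gw (b0 # B) (Suc ?n) c (glue ?n a0 (\<kappa>, x)))
        = negpow_coeff b0 (a0 - 1 - sum_list \<kappa>) * prod_list (map (negpow_coeff c) \<kappa>) * Mg (shiftA A c \<kappa>) B c"
      unfolding gw_glue[OF len] Mg_def length_shiftA[OF len] by (simp add: sum_distrib_left)
  qed simp
  also have "\<dots> = (\<Sum>\<kappa>\<in>Ls ?n N. nz b0 (int a0 - 1 - int (sum_list \<kappa>)) * prod_list (map (negpow_coeff c) \<kappa>)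
         * Mg (shiftA A c \<kappa>) B c)"
  proof (rule sum.mono_neutral_cong_left)
    show "finite (Ls ?n N)" by (rule finite_Ls)
    show "?K \<subseteq> Ls ?n N" using assms by (rule Kset_sub)
    show "\<forall>i\<in>Ls ?n N - ?K. nz b0 (int a0 - 1 - int (sum_list i)) * prod_list (map (negpow_coeff c) i) * Mg (shiftA A c i) B c = 0"
      by (auto simp: Kset_def Ls_def nz_def)
    show "\<And>x. x \<in> ?K \<Longrightarrow> negpow_coeff b0 (a0 - 1 - sum_list x) * prod_list (map (negpow_coeff c) x) * Mg (shiftA A c x) B c
       = nz b0 (int a0 - 1 - int (sum_list x)) * prod_list (map (negpow_coeff c) x) * Mg (shiftA A c x) B c"
      by (auto simp: Kset_def nz_def nat_diff_distrib)
  qed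
  finally show ?thesis .
qed


abbreviation pos :: "nat list \<Rightarrow> bool" where "pos X \<equiv> (\<forall>x\<in>set X. 0 < x)"

lemma shiftA_snoc: "length u = length X \<Longrightarrow> shiftA (X @ [x]) c (u @ [t]) = shiftA X c u @ [x + c + t]"
  by (simp add: shiftA_def)

lemma rev_shiftA: "length u = length X \<Longrightarrow> rev (shiftA X c u) = shiftA (rev X) c (rev u)"
  by (simp add: shiftA_def zip_rev rev_map)

lemma pos_shiftA: "pos X \<Longrightarrow> length u = length X \<Longrightarrow> pos (shiftA X c u)"
  by (auto simp: shiftA_def set_zip) (metis nth_mem gr0I)

lemma Ls_snoc_sum:
  "(\<Sum>\<kappa>\<in>Ls (Suc r) N. g \<kappa>) = (\<Sum>u\<in>Ls r N. \<Sum>t\<le>N. g (u @ [t]))"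
proof -
  have "(\<Sum>\<kappa>\<in>Ls (Suc r) N. g \<kappa>) = (\<Sum>z\<in>Ls r N \<times> {..N}. g (fst z @ [snd z]))"
  proof (rule sum.reindex_bij_witness[where i = "\<lambda>z. fst z @ [snd z]" and j = "\<lambda>\<kappa>. (butlast \<kappa>, last \<kappa>)"])
    fix \<kappa> assume k: "\<kappa> \<in> Ls (Suc r) N"
    then have ne: "\<kappa> \<noteq> []" by (auto simp: Ls_def)
    show "fst (butlast \<kappa>, last \<kappa>) @ [snd (butlast \<kappa>, last \<kappa>)] = \<kappa>" using ne by simp
    show "(butlast \<kappa>, last \<kappa>) \<in> Ls r N \<times> {..N}"
      using k ne by (auto simp: Ls_def dest: in_set_butlastD) (metis last_in_set subsetD atMost_iff)
    show "g (fst (butlast \<kappa>, last \<kappa>) @ [snd (butlast \<kappa>, last \<kappa>)]) = g \<kappa>" using ne by simp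
  next
    fix z assume "z \<in> Ls r N \<times> {..N}"
    then show "(butlast (fst z @ [snd z]), last (fst z @ [snd z])) = z" "fst z @ [snd z] \<in> Ls (Suc r) N"
      by (auto simp: Ls_def)
  qed
  also have "\<dots> = (\<Sum>u\<in>Ls r N. \<Sum>t\<le>N. g (u @ [t]))"
    by (simp add: sum.cartesian_product split_def)
  finally show ?thesis .
qed

lemma Ls_rev_sum: "(\<Sum>w\<in>Ls r N. g (rev w)) = (\<Sum>w\<in>Ls r N. g w)"
  by (rule sum.reindex_bij_witness[where i = rev and j = rev]) (auto simp: Ls_def)


lemma step:
  fixes Am Bm :: "nat list" and a0 al b0 bl c r :: nat
  assumes IH1: "\<And>X Y. length X = Suc r \<Longrightarrow> length Y = Suc r \<Longrightarrow> pos X \<Longrightarrow> pos Y \<Longrightarrow> Mg X Y c = Mg (rev Y) (rev X) c"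
    and IH2: "\<And>X Y. length X = r \<Longrightarrow> length Y = r \<Longrightarrow> pos X \<Longrightarrow> pos Y \<Longrightarrow> Mg X Y c = Mg (rev Y) (rev X) c"
    and lA: "length Am = r" and lB: "length Bm = r"
    and pA: "pos Am" and pB: "pos Bm"
    and p: "0 < a0" "0 < al" "0 < b0" "0 < bl"
  shows "Mg (a0 # Am @ [al]) (b0 # Bm @ [bl]) c = Mg (bl # rev Bm @ [b0]) (al # rev Am @ [a0]) c"
proof -
  define N where "N = a0 + bl"
  have N: "a0 \<le> N" "bl \<le> N" by (auto simp: N_def)
  define P where "P = (\<lambda>u. prod_list (map (negpow_coeff c) u))"
  define T where "T = (\<lambda>u w. P u * P w * Mg (shiftA Am c u) (shiftA Bm c w) c)"
  define \<alpha> where "\<alpha> = (\<lambda>u. int a0 - 1 - int (sum_list u))"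
  define \<beta> where "\<beta> = (\<lambda>w. int bl - 1 - int (sum_list w))"
  have Psnoc: "P (u @ [t]) = P u * negpow_coeff c t" for u t by (simp add: P_def)
  have Prev: "P (rev u) = P u" for u by (simp add: P_def rev_map[symmetric] prod_list.rev)
  have \<beta>rev: "\<beta> (rev w) = \<beta> w" for w by (simp add: \<beta>_def sum_list_rev)
  have \<alpha>le: "\<alpha> u \<le> int N" for u using N by (simp add: \<alpha>_def)
  have \<beta>le: "\<beta> w \<le> int N" for w using N by (simp add: \<beta>_def)

  have innerL: "Mg (shiftA (Am @ [al]) c (u @ [t])) (Bm @ [bl]) c
      = (\<Sum>w\<in>Ls r N. nz (al + c + t) (\<beta> w) * P w * Mg (shiftA Am c u) (shiftA Bm c w) c)"
    if u: "u \<in> Ls r N" for u t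
  proof -
    have lu: "length u = r" using u by (simp add: Ls_def)
    have e1: "shiftA (Am @ [al]) c (u @ [t]) = shiftA Am c u @ [al + c + t]"
      using lu lA by (simp add: shiftA_snoc)
    have "Mg (shiftA (Am @ [al]) c (u @ [t])) (Bm @ [bl]) c
        = Mg (rev (Bm @ [bl])) (rev (shiftA (Am @ [al]) c (u @ [t]))) c"
    proof (rule IH1)
      have "pos (shiftA Am c u)" using pos_shiftA[OF pA] lu lA by simp
      then show "pos (shiftA (Am @ [al]) c (u @ [t]))" using p by (auto simp: e1)
    qed (use lu lA lB pA pB p in \<open>auto simp: e1\<close>)
    also have "\<dots> = Mg (bl # rev Bm) ((al + c + t) # rev (shiftA Am c u)) c"
      by (simp add: e1)
    also have "\<dots> = (\<Sum>v\<in>Ls r N. nz (al + c + t) (int bl - 1 - int (sum_list v)) * P v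
          * Mg (shiftA (rev Bm) c v) (rev (shiftA Am c u)) c)"
      using peel[OF N(2), of "rev Bm" "al + c + t" "rev (shiftA Am c u)" c] lB by (simp add: P_def)
    also have "\<dots> = (\<Sum>v\<in>Ls r N. nz (al + c + t) (\<beta> (rev v)) * P (rev v)
          * Mg (shiftA Am c u) (shiftA Bm c (rev v)) c)"
    proof (rule sum.cong)
      fix v assume v: "v \<in> Ls r N"
      then have lv: "length v = r" by (simp add: Ls_def)
      have "Mg (shiftA (rev Bm) c v) (rev (shiftA Am c u)) c
          = Mg (rev (rev (shiftA Am c u))) (rev (shiftA (rev Bm) c v)) c"
      proof (rule IH2)
        show "pos (shiftA (rev Bm) c v)" using pos_shiftA[of "rev Bm" v c] pB lv lB by simp
        show "pos (rev (shiftA Am c u))" using pos_shiftA[OF pA, of u c] lu lA by simp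
      qed (use lu lv lA lB in auto)
      also have "\<dots> = Mg (shiftA Am c u) (shiftA Bm c (rev v)) c"
        using lv lB by (simp add: rev_shiftA)
      finally show "nz (al + c + t) (int bl - 1 - int (sum_list v)) * P v * Mg (shiftA (rev Bm) c v) (rev (shiftA Am c u)) c
          = nz (al + c + t) (\<beta> (rev v)) * P (rev v) * Mg (shiftA Am c u) (shiftA Bm c (rev v)) c"
        by (simp add: \<beta>rev Prev \<beta>_def)
    qed simp
    also have "\<dots> = (\<Sum>w\<in>Ls r N. nz (al + c + t) (\<beta> w) * P w * Mg (shiftA Am c u) (shiftA Bm c w) c)"
      by (rule Ls_rev_sum[where g = "\<lambda>w. nz (al + c + t) (\<beta> w) * P w * Mg (shiftA Am c u) (shiftA Bm c w) c"])
    finally show ?thesis .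
  qed
  have LHS: "Mg (a0 # Am @ [al]) (b0 # Bm @ [bl]) c
      = (\<Sum>u\<in>Ls r N. \<Sum>w\<in>Ls r N. T u w * (\<Sum>t\<le>N. nz b0 (\<alpha> u - int t) * negpow_coeff c t * nz (al + c + t) (\<beta> w)))"
  proof -
    have "Mg (a0 # Am @ [al]) (b0 # Bm @ [bl]) c
        = (\<Sum>\<kappa>\<in>Ls (Suc r) N. nz b0 (int a0 - 1 - int (sum_list \<kappa>)) * P \<kappa> * Mg (shiftA (Am @ [al]) c \<kappa>) (Bm @ [bl]) c)"
      using peel[OF N(1), of "Am @ [al]" b0 "Bm @ [bl]" c] lA by (simp add: P_def)
    also have "\<dots> = (\<Sum>u\<in>Ls r N. \<Sum>t\<le>N. nz b0 (int a0 - 1 - int (sum_list (u @ [t]))) * P (u @ [t])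
          * Mg (shiftA (Am @ [al]) c (u @ [t])) (Bm @ [bl]) c)"
      by (rule Ls_snoc_sum)
    also have "\<dots> = (\<Sum>u\<in>Ls r N. \<Sum>t\<le>N. \<Sum>w\<in>Ls r N. T u w * (nz b0 (\<alpha> u - int t) * negpow_coeff c t * nz (al + c + t) (\<beta> w)))"
    proof (intro sum.cong refl)
      fix u t assume u: "u \<in> Ls r N"
      show "nz b0 (int a0 - 1 - int (sum_list (u @ [t]))) * P (u @ [t]) * Mg (shiftA (Am @ [al]) c (u @ [t])) (Bm @ [bl]) c
          = (\<Sum>w\<in>Ls r N. T u w * (nz b0 (\<alpha> u - int t) * negpow_coeff c t * nz (al + c + t) (\<beta> w)))"
        unfolding innerL[OF u] Psnoc
        by (simp add: sum_distrib_left T_def \<alpha>_def algebra_simps)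
    qed
    also have "\<dots> = (\<Sum>u\<in>Ls r N. \<Sum>w\<in>Ls r N. \<Sum>t\<le>N. T u w * (nz b0 (\<alpha> u - int t) * negpow_coeff c t * nz (al + c + t) (\<beta> w)))"
      by (intro sum.cong refl sum.swap)
    also have "\<dots> = (\<Sum>u\<in>Ls r N. \<Sum>w\<in>Ls r N. T u w * (\<Sum>t\<le>N. nz b0 (\<alpha> u - int t) * negpow_coeff c t * nz (al + c + t) (\<beta> w)))"
      by (simp add: sum_distrib_left)
    finally show ?thesis .
  qed

  have innerR: "Mg (shiftA (rev Bm @ [b0]) c (v @ [t])) (rev Am @ [a0]) c
      = (\<Sum>u\<in>Ls r N. nz (b0 + c + t) (\<alpha> u) * P u * Mg (shiftA Am c u) (shiftA Bm c (rev v)) c)"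
    if v: "v \<in> Ls r N" for v t
  proof -
    have lv: "length v = r" using v by (simp add: Ls_def)
    have e1: "shiftA (rev Bm @ [b0]) c (v @ [t]) = shiftA (rev Bm) c v @ [b0 + c + t]"
      using lv lB by (simp add: shiftA_snoc)
    have "Mg (shiftA (rev Bm @ [b0]) c (v @ [t])) (rev Am @ [a0]) c
        = Mg (rev (rev Am @ [a0])) (rev (shiftA (rev Bm @ [b0]) c (v @ [t]))) c"
    proof (rule IH1)
      have "pos (shiftA (rev Bm) c v)" using pos_shiftA[of "rev Bm" v c] pB lv lB by simp
      then show "pos (shiftA (rev Bm @ [b0]) c (v @ [t]))" using p by (auto simp: e1)
    qed (use lv lA lB pA pB p in \<open>auto simp: e1\<close>)
    also have "\<dots> = Mg (a0 # Am) ((b0 + c + t) # rev (shiftA (rev Bm) c v)) c"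
      by (simp add: e1)
    also have "\<dots> = (\<Sum>u\<in>Ls r N. nz (b0 + c + t) (\<alpha> u) * P u * Mg (shiftA Am c u) (rev (shiftA (rev Bm) c v)) c)"
      using peel[OF N(1), of Am "b0 + c + t" "rev (shiftA (rev Bm) c v)" c] lA by (simp add: P_def \<alpha>_def)
    also have "\<dots> = (\<Sum>u\<in>Ls r N. nz (b0 + c + t) (\<alpha> u) * P u * Mg (shiftA Am c u) (shiftA Bm c (rev v)) c)"
      using lv lB by (simp add: rev_shiftA)
    finally show ?thesis .
  qed
  have RHS: "Mg (bl # rev Bm @ [b0]) (al # rev Am @ [a0]) c
      = (\<Sum>u\<in>Ls r N. \<Sum>w\<in>Ls r N. T u w * (\<Sum>t\<le>N. nz al (\<beta> w - int t) * negpow_coeff c t * nz (b0 + c + t) (\<alpha> u)))"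
  proof -
    have "Mg (bl # rev Bm @ [b0]) (al # rev Am @ [a0]) c
        = (\<Sum>\<kappa>\<in>Ls (Suc r) N. nz al (int bl - 1 - int (sum_list \<kappa>)) * P \<kappa> * Mg (shiftA (rev Bm @ [b0]) c \<kappa>) (rev Am @ [a0]) c)"
      using peel[OF N(2), of "rev Bm @ [b0]" al "rev Am @ [a0]" c] lB by (simp add: P_def)
    also have "\<dots> = (\<Sum>v\<in>Ls r N. \<Sum>t\<le>N. nz al (int bl - 1 - int (sum_list (v @ [t]))) * P (v @ [t])
          * Mg (shiftA (rev Bm @ [b0]) c (v @ [t])) (rev Am @ [a0]) c)"
      by (rule Ls_snoc_sum)
    also have "\<dots> = (\<Sum>v\<in>Ls r N. \<Sum>t\<le>N. \<Sum>u\<in>Ls r N. T u (rev v) * (nz al (\<beta> (rev v) - int t) * negpow_coeff c t * nz (b0 + c + t) (\<alpha> u)))"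
    proof (intro sum.cong refl)
      fix v t assume v: "v \<in> Ls r N"
      show "nz al (int bl - 1 - int (sum_list (v @ [t]))) * P (v @ [t]) * Mg (shiftA (rev Bm @ [b0]) c (v @ [t])) (rev Am @ [a0]) c
          = (\<Sum>u\<in>Ls r N. T u (rev v) * (nz al (\<beta> (rev v) - int t) * negpow_coeff c t * nz (b0 + c + t) (\<alpha> u)))"
        unfolding innerR[OF v] Psnoc \<beta>rev
        by (simp add: sum_distrib_left T_def \<beta>_def Prev algebra_simps)
    qed
    also have "\<dots> = (\<Sum>v\<in>Ls r N. \<Sum>u\<in>Ls r N. \<Sum>t\<le>N. T u (rev v) * (nz al (\<beta> (rev v) - int t) * negpow_coeff c t * nz (b0 + c + t) (\<alpha> u)))"
      by (intro sum.cong refl sum.swap)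
    also have "\<dots> = (\<Sum>w\<in>Ls r N. \<Sum>u\<in>Ls r N. \<Sum>t\<le>N. T u w * (nz al (\<beta> w - int t) * negpow_coeff c t * nz (b0 + c + t) (\<alpha> u)))"
      by (rule Ls_rev_sum[where g = "\<lambda>w. \<Sum>u\<in>Ls r N. \<Sum>t\<le>N. T u w * (nz al (\<beta> w - int t) * negpow_coeff c t * nz (b0 + c + t) (\<alpha> u))"])
    also have "\<dots> = (\<Sum>u\<in>Ls r N. \<Sum>w\<in>Ls r N. \<Sum>t\<le>N. T u w * (nz al (\<beta> w - int t) * negpow_coeff c t * nz (b0 + c + t) (\<alpha> u)))"
      by (rule sum.swap)
    also have "\<dots> = (\<Sum>u\<in>Ls r N. \<Sum>w\<in>Ls r N. T u w * (\<Sum>t\<le>N. nz al (\<beta> w - int t) * negpow_coeff c t * nz (b0 + c + t) (\<alpha> u)))"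
      by (simp add: sum_distrib_left)
    finally show ?thesis .
  qed
  show ?thesis
    unfolding LHS RHS using base_id[OF \<alpha>le \<beta>le] by simp
qed


lemma gterms_nil: "gterms [] c = {(\<lambda>_. undefined, \<lambda>_. undefined)}"
  by (auto simp: gterms_def ct_pairs_def)

lemma Mg_nil: "Mg [] B c = 1"
  by (simp add: Mg_def gterms_nil gw_def ct_pairs_def)

lemma Ls_0: "Ls 0 N = {[]}"
  by (auto simp: Ls_def)

lemma Mg_single: "Mg [a] [b] c = nz b (int a - 1)"
  using peel[of a a "[]" b "[]" c] by (simp add: Ls_0 Mg_nil shiftA_def)

lemma main:
  "length A = n \<Longrightarrow> length B = n \<Longrightarrow> pos A \<Longrightarrow> pos B \<Longrightarrow> Mg A B c = Mg (rev B) (rev A) c"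
proof (induction n arbitrary: A B rule: less_induct)
  case (less n)
  consider "n = 0" | "n = 1" | r where "n = Suc (Suc r)"
    by (metis One_nat_def not0_implies_Suc)
  then show ?case
  proof cases
    case 1 then show ?thesis using less.prems by simp
  next
    case 2
    then obtain a b where ab: "A = [a]" "B = [b]" using less.prems
      by (metis One_nat_def length_0_conv length_Suc_conv)
    have "0 < a" "0 < b" using less.prems ab by auto
    then show ?thesis unfolding ab using np_sym[of a b]
      by (simp add: Mg_single nz_def nat_diff_distrib)
  next
    case 3
    obtain a0 A' where A1: "A = a0 # A'" using less.prems 3 by (cases A) auto
    have "A' \<noteq> []" using less.prems 3 A1 by auto
    then obtain Am al where A2: "A' = Am @ [al]" by (metis append_butlast_last_id)
    obtain b0 B' where B1: "B = b0 # B'" using less.prems 3 by (cases B) auto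
    have "B' \<noteq> []" using less.prems 3 B1 by auto
    then obtain Bm bl where B2: "B' = Bm @ [bl]" by (metis append_butlast_last_id)
    have lA: "length Am = r" and lB: "length Bm = r" using less.prems 3 A1 A2 B1 B2 by auto
    have pos: "pos Am" "pos Bm" "0 < a0" "0 < al" "0 < b0" "0 < bl"
      using less.prems A1 A2 B1 B2 by auto
    have "Mg (a0 # Am @ [al]) (b0 # Bm @ [bl]) c = Mg (bl # rev Bm @ [b0]) (al # rev Am @ [a0]) c"
    proof (rule step[OF _ _ lA lB pos])
      fix X Y :: "nat list"
      assume "length X = Suc r" "length Y = Suc r" "pos X" "pos Y"
      then show "Mg X Y c = Mg (rev Y) (rev X) c" using less.IH[of "Suc r" X Y] 3 by simp
    next
      fix X Y :: "nat list"
      assume "length X = r" "length Y = r" "pos X" "pos Y"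
      then show "Mg X Y c = Mg (rev Y) (rev X) c" using less.IH[of r X Y] 3 by simp
    qed
    then show ?thesis unfolding A1 A2 B1 B2 by simp
  qed
qed

theorem corollary4p1:
  fixes n a b c :: nat
  assumes "n > 0" and "a > 0" and "b > 0"
  shows "M n a b c = M n b a c"
proof -
  have "M n a b c = Mg (replicate n a) (replicate n b) c" by (rule M_Mg)
  also have "\<dots> = Mg (rev (replicate n b)) (rev (replicate n a)) c"
    by (rule main) (use assms in auto)
  also have "\<dots> = M n b a c" by (simp add: M_Mg)
  finally show ?thesis .
qed

end
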